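(* If $x_1:A_1,\dots,x_k:A_k\vdash t:A$ is derivable in $\mathbf{IL}_{\mathbf{at}}$, then the term $t$ of $A$ from $x_1:A_1,\dots,x_k:A_k$ is valid in every phase model $(D_{\mathcal M},* )$; that is, for all $(m_i\rhd t_i)\in A_i^*$ ($1\le i\le k$) we have $(m_1\cdots m_k\rhd t[x_1:=t_1,\dots,x_k:=t_k])\in A^*$.
   Context: System $\mathbf{IL}_{\mathbf{at}}$: formulas $A ::= X\mid A\to B\mid \forall X.A$ ($X$ atoms); terms $t ::= x\mid c^A\mid\lambda x.t\mid ts\mid\Lambda X.t\mid tX$ (a term-constant $c^A$ for each formula $A$; $tX$ only with $X$ an atom). $\Gamma\vdash t:A$ is derivable by: $\Gamma,x:A\vdash x:A$; $\Gamma\vdash c^A:A$; from $\Gamma,x:A\vdash t:B$ infer $\Gamma\vdash\lambda x.t:A\to B$; from $\Gamma\vdash t:A\to B$, $\Gamma\vdash s:A$ infer $\Gamma\vdash ts:B$; from $\Gamma\vdash t:A$ with $X$ not free in the formulas of $\Gamma$ infer $\Gamma\vdash\Lambda X.t:\forall X.A$; from $\Gamma\vdash t:\forall X.A$ infer $\Gamma\vdash tY:A[X:=Y]$ ($Y$ an atom). Substitutions are capture-avoiding. Phase space: an idempotent commutative monoid $\mathcal M=(M,\cdot,\varepsilon)$ ($m\cdot m=m$); domain $B_{\mathcal M}=\{(m\rhd t)\mid m\in M,\ t\text{ a term}\}$; $D_{\mathcal M}$ is the set of closed sets, i.e. subsets $\alpha\subseteq B_{\mathcal M}$ such that (Monotonicity)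 $(m\rhd t)\in\alpha$ implies $(m\cdot n\rhd t)\in\alpha$ for all $n\in M$, and (Expansion) for $T_1,\dots,T_k$ terms or atoms: (i) $(m\rhd t[x:=s]T_1\cdots T_k)\in\alpha$ implies $(m\rhd(\lambda x.t)sT_1\cdots T_k)\in\alpha$; (ii) $(m\rhd t[X:=Y]T_1\cdots T_k)\in\alpha$ implies $(m\rhd(\Lambda X.t)YT_1\cdots T_k)\in\alpha$. Phase model $(D_{\mathcal M},* )$: a phase space with an interpretation such that $X^*\in D_{\mathcal M}$ for every atom $X$; $(A\to B)^*=\{(m\rhd t)\mid (m\cdot n\rhd ts)\in B^*\text{ for all }(n\rhd s)\in A^*\}$; $(\forall X.A)^*=\{(m\rhd t)\mid (m\rhd tY)\in(A[X:=Y])^*\text{ for every atom }Y\}$; and $(\varepsilon\rhd c^A)\in A^*$ for every formula $A$. *)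

theory Defs
  imports Main
begin

text \<open>Atoms are de Bruijn indices: an index below the binder depth is bound
  by an enclosing All, any other index denotes a free atom (the free atom named n
  appears as index n + depth). At top level every Atom n is the free atom n.\<close>

datatype fm = Atom nat | Imp fm fm | All fm

text \<open>Terms: term variables and atoms are de Bruijn indices in two separate namespaces.
  Lam binds term index 0, TLam binds atom index 0.\<close>

datatype trm = Var nat | Const fm | Lam trm | App trm trm | TLam trm | TApp trm nat

primrec fm_lift :: "nat \<Rightarrow> fm \<Rightarrow> fm" where
  "fm_lift k (Atom i) = Atom (if i < k then i else Suc i)"
| "fm_lift k (Imp A B) = Imp (fm_lift k A) (fm_lift k B)"
| "fm_lift k (All A) = All (fm_lift (Suc k) A)"

text \<open>Instantiating the atom bound at depth k by the (top-level) free atom Y.\<close>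
primrec fm_inst :: "nat \<Rightarrow> nat \<Rightarrow> fm \<Rightarrow> fm" where
  "fm_inst k Y (Atom i) = Atom (if i < k then i else if i = k then Y + k else i - 1)"
| "fm_inst k Y (Imp A B) = Imp (fm_inst k Y A) (fm_inst k Y B)"
| "fm_inst k Y (All A) = All (fm_inst (Suc k) Y A)"

text \<open>For All A (i.e. \<forall>X.A), inst A Y is A[X:=Y].\<close>
definition inst :: "fm \<Rightarrow> nat \<Rightarrow> fm" where
  "inst A Y = fm_inst 0 Y A"

primrec tm_lift :: "nat \<Rightarrow> trm \<Rightarrow> trm" where
  "tm_lift k (Var i) = Var (if i < k then i else Suc i)"
| "tm_lift k (Const A) = Const A"
| "tm_lift k (Lam t) = Lam (tm_lift (Suc k) t)"
| "tm_lift k (App t s) = App (tm_lift k t) (tm_lift k s)"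
| "tm_lift k (TLam t) = TLam (tm_lift k t)"
| "tm_lift k (TApp t Y) = TApp (tm_lift k t) Y"

primrec ty_lift :: "nat \<Rightarrow> trm \<Rightarrow> trm" where
  "ty_lift k (Var i) = Var i"
| "ty_lift k (Const A) = Const (fm_lift k A)"
| "ty_lift k (Lam t) = Lam (ty_lift k t)"
| "ty_lift k (App t s) = App (ty_lift k t) (ty_lift k s)"
| "ty_lift k (TLam t) = TLam (ty_lift (Suc k) t)"
| "ty_lift k (TApp t Y) = TApp (ty_lift k t) (if Y < k then Y else Suc Y)"

text \<open>Capture-avoiding substitution of s for the term variable at depth k
  (beta substitution: t[x:=s] for (\<lambda>x.t) s is tm_subst 0 s t).\<close>
primrec tm_subst :: "nat \<Rightarrow> trm \<Rightarrow> trm \<Rightarrow> trm" where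
  "tm_subst k s (Var i) = (if i < k then Var i else if i = k then s else Var (i - 1))"
| "tm_subst k s (Const A) = Const A"
| "tm_subst k s (Lam t) = Lam (tm_subst (Suc k) (tm_lift 0 s) t)"
| "tm_subst k s (App t u) = App (tm_subst k s t) (tm_subst k s u)"
| "tm_subst k s (TLam t) = TLam (tm_subst k (ty_lift 0 s) t)"
| "tm_subst k s (TApp t Y) = TApp (tm_subst k s t) Y"

text \<open>Instantiating the atom bound at depth k by the free atom Y inside a term
  (t[X:=Y] for (\<Lambda>X.t) Y is ty_inst 0 Y t).\<close>
primrec ty_inst :: "nat \<Rightarrow> nat \<Rightarrow> trm \<Rightarrow> trm" where
  "ty_inst k Y (Var i) = Var i"
| "ty_inst k Y (Const A) = Const (fm_inst k Y A)"
| "ty_inst k Y (Lam t) = Lam (ty_inst k Y t)"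
| "ty_inst k Y (App t s) = App (ty_inst k Y t) (ty_inst k Y s)"
| "ty_inst k Y (TLam t) = TLam (ty_inst (Suc k) Y t)"
| "ty_inst k Y (TApp t Z) =
     TApp (ty_inst k Y t) (if Z < k then Z else if Z = k then Y + k else Z - 1)"

primrec msubst :: "(nat \<Rightarrow> trm) \<Rightarrow> trm \<Rightarrow> trm" where
  "msubst \<sigma> (Var i) = \<sigma> i"
| "msubst \<sigma> (Const A) = Const A"
| "msubst \<sigma> (Lam t) = Lam (msubst (\<lambda>i. if i = 0 then Var 0 else tm_lift 0 (\<sigma> (i - 1))) t)"
| "msubst \<sigma> (App t s) = App (msubst \<sigma> t) (msubst \<sigma> s)"
| "msubst \<sigma> (TLam t) = TLam (msubst (\<lambda>i. ty_lift 0 (\<sigma> i)) t)"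
| "msubst \<sigma> (TApp t Y) = TApp (msubst \<sigma> t) Y"

text \<open>t[x_1:=t_1,...,x_k:=t_k] for a context of length k: variable i (< k) is
  replaced by ts ! i; other free variables are left alone (renumbered).\<close>
definition psubst :: "trm list \<Rightarrow> trm \<Rightarrow> trm" where
  "psubst ts t = msubst (\<lambda>i. if i < length ts then ts ! i else Var (i - length ts)) t"

text \<open>Contexts are lists; Var i has the type Gamma ! i; Lam extends the context at the front.
  The eigenvariable condition of the \<forall>-introduction is realised by lifting the context.\<close>
inductive typing :: "fm list \<Rightarrow> trm \<Rightarrow> fm \<Rightarrow> bool" where
  ty_var: "i < length \<Gamma> \<Longrightarrow> typing \<Gamma> (Var i) (\<Gamma> ! i)"
| ty_const: "typing \<Gamma> (Const A) A"
| ty_lam: "typing (A # \<Gamma>) t B \<Longrightarrow> typing \<Gamma> (Lam t) (Imp A B)"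
| ty_app: "typing \<Gamma> t (Imp A B) \<Longrightarrow> typing \<Gamma> s A \<Longrightarrow> typing \<Gamma> (App t s) B"
| ty_tlam: "typing (map (fm_lift 0) \<Gamma>) t A \<Longrightarrow> typing \<Gamma> (TLam t) (All A)"
| ty_tapp: "typing \<Gamma> t (All A) \<Longrightarrow> typing \<Gamma> (TApp t Y) (inst A Y)"

text \<open>Application spine t T_1 ... T_k, each T_j a term (Inl) or an atom (Inr).\<close>
definition spine :: "trm \<Rightarrow> (trm + nat) list \<Rightarrow> trm" where
  "spine t Ts = foldl (\<lambda>u a. case a of Inl s \<Rightarrow> App u s | Inr Y \<Rightarrow> TApp u Y) t Ts"

definition closed_set :: "('m::monoid_mult \<times> trm) set \<Rightarrow> bool" where
  "closed_set \<alpha> \<longleftrightarrow>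
     (\<forall>m t n. (m, t) \<in> \<alpha> \<longrightarrow> (m * n, t) \<in> \<alpha>) \<and>
     (\<forall>m t s Ts. (m, spine (tm_subst 0 s t) Ts) \<in> \<alpha> \<longrightarrow> (m, spine (App (Lam t) s) Ts) \<in> \<alpha>) \<and>
     (\<forall>m t Y Ts. (m, spine (ty_inst 0 Y t) Ts) \<in> \<alpha> \<longrightarrow> (m, spine (TApp (TLam t) Y) Ts) \<in> \<alpha>)"

text \<open>A phase model: the monoid is the type 'm (commutative, required idempotent),
  and star is the interpretation of formulas.\<close>
definition phase_model :: "(fm \<Rightarrow> ('m::comm_monoid_mult \<times> trm) set) \<Rightarrow> bool" where
  "phase_model star \<longleftrightarrow>
     (\<forall>m::'m. m * m = m) \<and>
     (\<forall>X. closed_set (star (Atom X))) \<and>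
     (\<forall>A B. star (Imp A B) =
        {(m, t). \<forall>n s. (n, s) \<in> star A \<longrightarrow> (m * n, App t s) \<in> star B}) \<and>
     (\<forall>A. star (All A) = {(m, t). \<forall>Y. (m, TApp t Y) \<in> star (inst A Y)}) \<and>
     (\<forall>A. (1, Const A) \<in> star A)"

end

theory Submission
  imports Defs
begin


definition up :: "(nat \<Rightarrow> nat) \<Rightarrow> nat \<Rightarrow> nat" where
  "up \<rho> i = (case i of 0 \<Rightarrow> 0 | Suc j \<Rightarrow> Suc (\<rho> j))"
lemma up_0[simp]: "up \<rho> 0 = 0" and up_Suc[simp]: "up \<rho> (Suc j) = Suc (\<rho> j)"
  by (simp_all add: up_def)

primrec fren :: "(nat \<Rightarrow> nat) \<Rightarrow> fm \<Rightarrow> fm" where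
  "fren \<rho> (Atom i) = Atom (\<rho> i)"
| "fren \<rho> (Imp A B) = Imp (fren \<rho> A) (fren \<rho> B)"
| "fren \<rho> (All A) = All (fren (up \<rho>) A)"

primrec tren :: "(nat \<Rightarrow> nat) \<Rightarrow> trm \<Rightarrow> trm" where
  "tren \<rho> (Var i) = Var i"
| "tren \<rho> (Const A) = Const (fren \<rho> A)"
| "tren \<rho> (Lam t) = Lam (tren \<rho> t)"
| "tren \<rho> (App t s) = App (tren \<rho> t) (tren \<rho> s)"
| "tren \<rho> (TLam t) = TLam (tren (up \<rho>) t)"
| "tren \<rho> (TApp t Y) = TApp (tren \<rho> t) (\<rho> Y)"

lemma up_comp: "up (\<rho> \<circ> \<rho>') = up \<rho> \<circ> up \<rho>'"
  by (rule ext) (simp add: up_def split: nat.split)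
lemma up_id: "up id = id"
  by (rule ext) (simp add: up_def split: nat.split)
lemma up_id': "up (\<lambda>x. x) = (\<lambda>x. x)"
  using up_id by (simp add: id_def)

lemma fren_comp: "fren \<rho> (fren \<rho>' A) = fren (\<rho> \<circ> \<rho>') A"
  by (induction A arbitrary: \<rho> \<rho>') (simp_all add: up_comp)
lemma fren_id: "fren (\<lambda>x. x) A = A"
  by (induction A) (simp_all add: up_id')
lemma tren_comp: "tren \<rho> (tren \<rho>' t) = tren (\<rho> \<circ> \<rho>') t"
  by (induction t arbitrary: \<rho> \<rho>') (simp_all add: up_comp fren_comp)
lemma tren_id: "tren (\<lambda>x. x) t = t"
  by (induction t) (simp_all add: up_id' fren_id)

definition rY :: "nat \<Rightarrow> nat \<Rightarrow> nat" where
  "rY Y i = (case i of 0 \<Rightarrow> Y | Suc j \<Rightarrow> j)"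

lemma upk_lift: "(up ^^ k) Suc i = (if i < k then i else Suc i)"
  by (induction k arbitrary: i) (auto simp: up_def split: nat.split)
lemma upk_inst: "(up ^^ k) (rY Y) i = (if i < k then i else if i = k then Y + k else i - 1)"
  by (induction k arbitrary: i) (auto simp: up_def rY_def split: nat.split)

lemma fm_lift_fren: "fm_lift k A = fren ((up ^^ k) Suc) A"
  by (induction A arbitrary: k) (simp_all add: upk_lift)
lemma fm_inst_fren: "fm_inst k Y A = fren ((up ^^ k) (rY Y)) A"
  by (induction A arbitrary: k) (simp_all add: upk_inst)
lemma ty_lift_tren: "ty_lift k t = tren ((up ^^ k) Suc) t"
  by (induction t arbitrary: k) (simp_all add: upk_lift fm_lift_fren)
lemma ty_inst_tren: "ty_inst k Y t = tren ((up ^^ k) (rY Y)) t"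
  by (induction t arbitrary: k) (simp_all add: upk_inst fm_inst_fren)

lemma fm_size_fren[simp]: "size (fren \<rho> A) = size A"
  by (induction A arbitrary: \<rho>) simp_all

definition shift :: "(nat \<Rightarrow> trm) \<Rightarrow> nat \<Rightarrow> trm" where
  "shift \<sigma> = (\<lambda>i. if i = 0 then Var 0 else tm_lift 0 (\<sigma> (i - 1)))"

lemma msubst_Lam[simp]: "msubst \<sigma> (Lam t) = Lam (msubst (shift \<sigma>) t)"
  by (simp add: shift_def)
declare msubst.simps(3)[simp del]

lemma tren_tm_lift: "tren \<rho> (tm_lift k u) = tm_lift k (tren \<rho> u)"
  by (induction u arbitrary: k \<rho>) simp_all

lemma tren_msubst: "tren \<rho> (msubst \<sigma> t) = msubst (tren \<rho> \<circ> \<sigma>) (tren \<rho> t)"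
proof (induction t arbitrary: \<rho> \<sigma>)
  case (Lam t)
  have "(\<lambda>a. tren \<rho> (shift \<sigma> a)) = shift (\<lambda>a. tren \<rho> (\<sigma> a))"
    by (rule ext) (simp add: shift_def tren_tm_lift)
  then show ?case using Lam by (simp add: msubst_Lam)
next
  case (TLam t)
  have "tren (up \<rho>) \<circ> (\<lambda>i. ty_lift 0 (\<sigma> i)) = (\<lambda>i. ty_lift 0 ((tren \<rho> \<circ> \<sigma>) i))"
    by (rule ext) (simp add: ty_lift_tren tren_comp up_comp[symmetric] comp_def)
  then show ?case using TLam by (simp add: comp_def)
qed simp_all

lemma msubst_Var: "msubst Var t = t"
proof (induction t)
  case (Lam t)
  have "shift Var = Var" by (rule ext) (simp add: shift_def)
  then show ?case using Lam by (simp add: msubst_Lam)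
qed simp_all

lemma msubst_ren: "msubst \<tau> (msubst (Var \<circ> r) t) = msubst (\<tau> \<circ> r) t"
proof (induction t arbitrary: \<tau> r)
  case (Lam t)
  have 1: "shift (Var \<circ> r) = Var \<circ> up r"
    by (rule ext) (simp add: shift_def up_def split: nat.split)
  have 2: "shift \<tau> \<circ> up r = shift (\<tau> \<circ> r)"
    by (rule ext) (simp add: shift_def up_def split: nat.split)
  show ?case using Lam by (simp add: 1[unfolded comp_def] 2[unfolded comp_def])
next
  case (TLam t)
  have "(\<lambda>i. ty_lift 0 ((Var \<circ> r) i)) = Var \<circ> r" by (rule ext) simp
  then show ?case using TLam by (simp add: comp_def)
qed simp_all

lemma tm_lift_msubst: "tm_lift k u = msubst (\<lambda>i. Var (if i < k then i else Suc i)) u"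
proof (induction u arbitrary: k)
  case (Lam u)
  have "shift (\<lambda>i. Var (if i < k then i else Suc i)) = (\<lambda>i. Var (if i < Suc k then i else Suc i))"
    by (rule ext) (auto simp: shift_def)
  then show ?case using Lam by (simp add: msubst_Lam)
qed simp_all

definition sub :: "nat \<Rightarrow> trm \<Rightarrow> nat \<Rightarrow> trm" where
  "sub k s i = (if i < k then Var i else if i = k then s else Var (i - 1))"

lemma tm_subst_msubst: "tm_subst k s t = msubst (sub k s) t"
proof (induction t arbitrary: k s)
  case (Lam t)
  have "shift (sub k s) = sub (Suc k) (tm_lift 0 s)"
    by (rule ext) (auto simp: shift_def sub_def)
  then show ?case using Lam by (simp add: msubst_Lam)
next
  case (TLam t)
  have "(\<lambda>i. ty_lift 0 (sub k s i)) = sub k (ty_lift 0 s)"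
    by (rule ext) (auto simp: sub_def)
  then show ?case using TLam by (simp add: comp_def)
qed (simp_all add: sub_def)

definition scons :: "trm \<Rightarrow> (nat \<Rightarrow> trm) \<Rightarrow> nat \<Rightarrow> trm" where
  "scons s \<sigma> i = (case i of 0 \<Rightarrow> s | Suc j \<Rightarrow> \<sigma> j)"

lemma tm_lift0: "tm_lift 0 u = msubst (Var \<circ> Suc) u"
  by (simp add: tm_lift_msubst comp_def)

lemma ty_lift0_ren: "msubst (Var \<circ> r) (ty_lift 0 u) = ty_lift 0 (msubst (Var \<circ> r) u)"
  by (simp add: tren_msubst ty_lift_tren comp_def)

lemma msubst_ren2: "msubst (Var \<circ> r) (msubst \<sigma> t) = msubst (msubst (Var \<circ> r) \<circ> \<sigma>) t"
proof (induction t arbitrary: \<sigma> r)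
  case (Lam t)
  have 1: "shift (Var \<circ> r) = Var \<circ> up r"
    by (rule ext) (simp add: shift_def up_def split: nat.split)
  have "msubst (Var \<circ> up r) (tm_lift 0 u) = tm_lift 0 (msubst (Var \<circ> r) u)" for u
  proof -
    have "Var \<circ> up r \<circ> Suc = Var \<circ> Suc \<circ> r" by (rule ext) simp
    then show ?thesis by (simp add: tm_lift0 msubst_ren)
  qed
  then have 2: "msubst (Var \<circ> up r) \<circ> shift \<sigma> = shift (msubst (Var \<circ> r) \<circ> \<sigma>)"
    by (intro ext) (simp add: shift_def up_def)
  show ?case using Lam by (simp add: 1[unfolded comp_def] 2[unfolded comp_def])
next
  case (TLam t)
  have 1: "(\<lambda>i. ty_lift 0 ((Var \<circ> r) i)) = Var \<circ> r" by (rule ext) simp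
  have 2: "msubst (Var \<circ> r) \<circ> (\<lambda>i. ty_lift 0 (\<sigma> i)) = (\<lambda>i. ty_lift 0 ((msubst (Var \<circ> r) \<circ> \<sigma>) i))"
    by (rule ext) (simp add: ty_lift0_ren)
  show ?case using TLam by (simp add: 1[unfolded comp_def] 2[unfolded comp_def])
qed simp_all

lemma msubst_comp: "msubst \<tau> (msubst \<sigma> t) = msubst (msubst \<tau> \<circ> \<sigma>) t"
proof (induction t arbitrary: \<sigma> \<tau>)
  case (Lam t)
  have "msubst (shift \<tau>) (tm_lift 0 u) = tm_lift 0 (msubst \<tau> u)" for u
  proof -
    have "shift \<tau> \<circ> Suc = msubst (Var \<circ> Suc) \<circ> \<tau>" by (rule ext) (simp add: shift_def tm_lift0)
    then show ?thesis by (simp add: tm_lift0 msubst_ren msubst_ren2)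
  qed
  then have 2: "msubst (shift \<tau>) \<circ> shift \<sigma> = shift (msubst \<tau> \<circ> \<sigma>)"
    by (intro ext) (simp add: shift_def)
  show ?case using Lam by (simp add: 2[unfolded comp_def])
next
  case (TLam t)
  have 2: "msubst (\<lambda>i. ty_lift 0 (\<tau> i)) \<circ> (\<lambda>i. ty_lift 0 (\<sigma> i)) = (\<lambda>i. ty_lift 0 ((msubst \<tau> \<circ> \<sigma>) i))"
    by (rule ext) (simp add: tren_msubst ty_lift_tren comp_def)
  show ?case using TLam by (simp add: 2[unfolded comp_def])
qed simp_all

lemma beta_msubst: "tm_subst 0 s (msubst (shift \<sigma>) t) = msubst (scons s \<sigma>) t"
proof -
  have "msubst (sub 0 s) \<circ> shift \<sigma> = scons s \<sigma>"
  proof (rule ext)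
    fix i show "(msubst (sub 0 s) \<circ> shift \<sigma>) i = scons s \<sigma> i"
    proof (cases i)
      case 0 then show ?thesis by (simp add: shift_def sub_def scons_def)
    next
      case (Suc j)
      have "sub 0 s \<circ> Suc = Var" by (rule ext) (simp add: sub_def)
      then show ?thesis using Suc by (simp add: shift_def scons_def tm_lift0 msubst_ren msubst_Var)
    qed
  qed
  then show ?thesis by (simp add: tm_subst_msubst msubst_comp)
qed



lemma spine_Nil[simp]: "spine t [] = t" by (simp add: spine_def)
lemma spine_snoc_Inl: "spine t (Ts @ [Inl s]) = App (spine t Ts) s" by (simp add: spine_def)
lemma spine_snoc_Inr: "spine t (Ts @ [Inr Y]) = TApp (spine t Ts) Y" by (simp add: spine_def)

lemma size_inst[simp]: "size (inst A Y) = size A"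
  by (simp add: inst_def fm_inst_fren)

lemma closed_all:
  fixes star :: "fm \<Rightarrow> ('m::comm_monoid_mult \<times> trm) set"
  assumes pm: "phase_model star"
  shows "closed_set (star C)"
proof (induction "size C" arbitrary: C rule: less_induct)
  case less
  have imp: "\<And>A B. star (Imp A B) = {(m, t). \<forall>n s. (n, s) \<in> star A \<longrightarrow> (m * n, App t s) \<in> star B}"
    and all: "\<And>A. star (All A) = {(m, t). \<forall>Y. (m, TApp t Y) \<in> star (inst A Y)}"
    and at: "\<And>X. closed_set (star (Atom X))"
    using pm unfolding phase_model_def by blast+
  show ?case
  proof (cases C)
    case (Atom X) then show ?thesis using at by simp
  next
    case (Imp A B)
    have cB: "closed_set (star B)" using less Imp by simp
    show ?thesis unfolding closed_set_def Imp imp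
    proof (intro conjI allI impI)
      fix m t n assume "(m, t) \<in> {(m, t). \<forall>n s. (n, s) \<in> star A \<longrightarrow> (m * n, App t s) \<in> star B}"
      then show "(m * n, t) \<in> {(m, t). \<forall>n s. (n, s) \<in> star A \<longrightarrow> (m * n, App t s) \<in> star B}"
      proof (clarify)
        fix n' s assume h: "\<forall>n s. (n, s) \<in> star A \<longrightarrow> (m * n, App t s) \<in> star B" and ns: "(n', s) \<in> star A"
        then have "(m * n' * n, App t s) \<in> star B" using cB unfolding closed_set_def by blast
        moreover have "m * n' * n = m * n * n'" by (simp add: ac_simps)
        ultimately show "(m * n * n', App t s) \<in> star B" by simp
      qed
    next
      fix m t s Ts assume h: "(m, spine (tm_subst 0 s t) Ts) \<in> {(m, t). \<forall>n s. (n, s) \<in> star A \<longrightarrow> (m * n, App t s) \<in> star B}"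
      show "(m, spine (App (Lam t) s) Ts) \<in> {(m, t). \<forall>n s. (n, s) \<in> star A \<longrightarrow> (m * n, App t s) \<in> star B}"
      proof (clarify)
        fix n u assume "(n, u) \<in> star A"
        then have "(m * n, spine (tm_subst 0 s t) (Ts @ [Inl u])) \<in> star B"
          using h by (simp add: spine_snoc_Inl)
        then have "(m * n, spine (App (Lam t) s) (Ts @ [Inl u])) \<in> star B"
          using cB unfolding closed_set_def by blast
        then show "(m * n, App (spine (App (Lam t) s) Ts) u) \<in> star B" by (simp add: spine_snoc_Inl)
      qed
    next
      fix m t Y Ts assume h: "(m, spine (ty_inst 0 Y t) Ts) \<in> {(m, t). \<forall>n s. (n, s) \<in> star A \<longrightarrow> (m * n, App t s) \<in> star B}"
      show "(m, spine (TApp (TLam t) Y) Ts) \<in> {(m, t). \<forall>n s. (n, s) \<in> star A \<longrightarrow> (m * n, App t s) \<in> star B}"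
      proof (clarify)
        fix n u assume "(n, u) \<in> star A"
        then have "(m * n, spine (ty_inst 0 Y t) (Ts @ [Inl u])) \<in> star B"
          using h by (simp add: spine_snoc_Inl)
        then have "(m * n, spine (TApp (TLam t) Y) (Ts @ [Inl u])) \<in> star B"
          using cB unfolding closed_set_def by blast
        then show "(m * n, App (spine (TApp (TLam t) Y) Ts) u) \<in> star B" by (simp add: spine_snoc_Inl)
      qed
    qed
  next
    case (All A)
    have cA: "\<And>Y. closed_set (star (inst A Y))" using less All by simp
    show ?thesis unfolding closed_set_def All all
    proof (intro conjI allI impI)
      fix m t n assume "(m, t) \<in> {(m, t). \<forall>Y. (m, TApp t Y) \<in> star (inst A Y)}"
      then show "(m * n, t) \<in> {(m, t). \<forall>Y. (m, TApp t Y) \<in> star (inst A Y)}"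
        using cA unfolding closed_set_def by auto
    next
      fix m t s Ts assume h: "(m, spine (tm_subst 0 s t) Ts) \<in> {(m, t). \<forall>Y. (m, TApp t Y) \<in> star (inst A Y)}"
      show "(m, spine (App (Lam t) s) Ts) \<in> {(m, t). \<forall>Y. (m, TApp t Y) \<in> star (inst A Y)}"
      proof (clarify)
        fix Y
        have "(m, spine (tm_subst 0 s t) (Ts @ [Inr Y])) \<in> star (inst A Y)"
          using h by (simp add: spine_snoc_Inr)
        then have "(m, spine (App (Lam t) s) (Ts @ [Inr Y])) \<in> star (inst A Y)"
          using cA unfolding closed_set_def by blast
        then show "(m, TApp (spine (App (Lam t) s) Ts) Y) \<in> star (inst A Y)" by (simp add: spine_snoc_Inr)
      qed
    next
      fix m t Z Ts assume h: "(m, spine (ty_inst 0 Z t) Ts) \<in> {(m, t). \<forall>Y. (m, TApp t Y) \<in> star (inst A Y)}"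
      show "(m, spine (TApp (TLam t) Z) Ts) \<in> {(m, t). \<forall>Y. (m, TApp t Y) \<in> star (inst A Y)}"
      proof (clarify)
        fix Y
        have "(m, spine (ty_inst 0 Z t) (Ts @ [Inr Y])) \<in> star (inst A Y)"
          using h by (simp add: spine_snoc_Inr)
        then have "(m, spine (TApp (TLam t) Z) (Ts @ [Inr Y])) \<in> star (inst A Y)"
          using cA unfolding closed_set_def by blast
        then show "(m, TApp (spine (TApp (TLam t) Z) Ts) Y) \<in> star (inst A Y)" by (simp add: spine_snoc_Inr)
      qed
    qed
  qed
qed

lemma prod_list_nth:
  fixes ms :: "'m::comm_monoid_mult list"
  shows "i < length ms \<Longrightarrow> \<exists>r. prod_list ms = ms ! i * r"
proof (induction ms arbitrary: i)
  case Nil then show ?case by simp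
next
  case (Cons a ms)
  show ?case
  proof (cases i)
    case 0 then show ?thesis by auto
  next
    case (Suc j)
    then obtain r where "prod_list ms = ms ! j * r" using Cons by auto
    then have "prod_list (a # ms) = (a # ms) ! i * (a * r)" using Suc by (simp add: ac_simps)
    then show ?thesis by blast
  qed
qed

lemma sound:
  fixes star :: "fm \<Rightarrow> ('m::comm_monoid_mult \<times> trm) set"
  assumes "typing \<Gamma> t A" and pm: "phase_model star"
  shows "length ms = length \<Gamma> \<Longrightarrow> \<forall>i<length \<Gamma>. (ms ! i, \<sigma> i) \<in> star (fren \<rho> (\<Gamma> ! i))
    \<Longrightarrow> (prod_list ms, msubst \<sigma> (tren \<rho> t)) \<in> star (fren \<rho> A)"
  using assms(1)
proof (induction arbitrary: \<rho> \<sigma> ms rule: typing.induct)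
  case (ty_var i \<Gamma>)
  have "i < length ms" using ty_var.hyps ty_var.prems(1) by simp
  then obtain r where r: "prod_list ms = ms ! i * r" using prod_list_nth by blast
  have "(ms ! i, \<sigma> i) \<in> star (fren \<rho> (\<Gamma> ! i))" using ty_var.hyps ty_var.prems(2) by blast
  then have "(ms ! i * r, \<sigma> i) \<in> star (fren \<rho> (\<Gamma> ! i))"
    using closed_all[OF pm] unfolding closed_set_def by blast
  then show ?case using r by simp
next
  case (ty_const \<Gamma> A)
  have "(1, Const (fren \<rho> A)) \<in> star (fren \<rho> A)" using pm unfolding phase_model_def by blast
  then have "(1 * prod_list ms, Const (fren \<rho> A)) \<in> star (fren \<rho> A)"
    using closed_all[OF pm] unfolding closed_set_def by blast
  then show ?case by simp
next
  case (ty_lam A \<Gamma> t B)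
  have imp: "\<And>A B. star (Imp A B) = {(m, t). \<forall>n s. (n, s) \<in> star A \<longrightarrow> (m * n, App t s) \<in> star B}"
    using pm unfolding phase_model_def by blast
  show ?case unfolding imp fren.simps tren.simps msubst_Lam
  proof (clarify)
    fix n s assume ns: "(n, s) \<in> star (fren \<rho> A)"
    have "(prod_list (n # ms), msubst (scons s \<sigma>) (tren \<rho> t)) \<in> star (fren \<rho> B)"
    proof (rule ty_lam.IH)
      show "length (n # ms) = length (A # \<Gamma>)" using ty_lam by simp
      show "\<forall>i<length (A # \<Gamma>). ((n # ms) ! i, scons s \<sigma> i) \<in> star (fren \<rho> ((A # \<Gamma>) ! i))"
        using ty_lam.prems ns by (auto simp: scons_def nth_Cons split: nat.split)
    qed
    then have "(prod_list ms * n, spine (tm_subst 0 s (msubst (shift \<sigma>) (tren \<rho> t))) []) \<in> star (fren \<rho> B)"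
      by (simp add: beta_msubst mult.commute)
    then have "(prod_list ms * n, spine (App (Lam (msubst (shift \<sigma>) (tren \<rho> t))) s) []) \<in> star (fren \<rho> B)"
      using closed_all[OF pm] unfolding closed_set_def by blast
    then show "(prod_list ms * n, App (Lam (msubst (shift \<sigma>) (tren \<rho> t))) s) \<in> star (fren \<rho> B)" by simp
  qed
next
  case (ty_app \<Gamma> t A B s)
  have imp: "\<And>A B. star (Imp A B) = {(m, t). \<forall>n s. (n, s) \<in> star A \<longrightarrow> (m * n, App t s) \<in> star B}"
    and idem: "\<And>m::'m. m * m = m"
    using pm unfolding phase_model_def by blast+
  have 1: "(prod_list ms, msubst \<sigma> (tren \<rho> t)) \<in> star (Imp (fren \<rho> A) (fren \<rho> B))"
    using ty_app.IH(1) ty_app.prems by (simp only: fren.simps)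
  have 2: "(prod_list ms, msubst \<sigma> (tren \<rho> s)) \<in> star (fren \<rho> A)"
    using ty_app.IH(2) ty_app.prems by blast
  have "(prod_list ms * prod_list ms, App (msubst \<sigma> (tren \<rho> t)) (msubst \<sigma> (tren \<rho> s))) \<in> star (fren \<rho> B)"
    using 1 2 unfolding imp by blast
  then show ?case by (simp add: idem)
next
  case (ty_tlam \<Gamma> t A)
  have all: "\<And>A. star (All A) = {(m, t). \<forall>Y. (m, TApp t Y) \<in> star (inst A Y)}"
    using pm unfolding phase_model_def by blast
  show ?case unfolding all fren.simps tren.simps msubst.simps
  proof (clarify)
    fix Y
    define \<rho>' where "\<rho>' = rY Y \<circ> up \<rho>"
    have r1: "\<rho>' \<circ> Suc = \<rho>" by (rule ext) (simp add: \<rho>'_def rY_def)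
    have r2: "rY Y \<circ> Suc = id" by (rule ext) (simp add: rY_def)
    have "(prod_list ms, msubst \<sigma> (tren \<rho>' t)) \<in> star (fren \<rho>' A)"
    proof (rule ty_tlam.IH)
      show "length ms = length (map (fm_lift 0) \<Gamma>)" using ty_tlam by simp
      show "\<forall>i<length (map (fm_lift 0) \<Gamma>). (ms ! i, \<sigma> i) \<in> star (fren \<rho>' (map (fm_lift 0) \<Gamma> ! i))"
        using ty_tlam.prems by (simp add: fm_lift_fren fren_comp r1)
    qed
    moreover have "ty_inst 0 Y (msubst (\<lambda>i. ty_lift 0 (\<sigma> i)) (tren (up \<rho>) t)) = msubst \<sigma> (tren \<rho>' t)"
    proof -
      have "(\<lambda>a. tren (rY Y) (ty_lift 0 (\<sigma> a))) = \<sigma>"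
        using r2 by (simp add: ty_lift_tren tren_comp tren_id[unfolded id_def] id_def)
      then show ?thesis by (simp add: ty_inst_tren tren_msubst tren_comp \<rho>'_def comp_def)
    qed
    moreover have "fren \<rho>' A = inst (fren (up \<rho>) A) Y"
      by (simp add: inst_def fm_inst_fren fren_comp \<rho>'_def)
    ultimately have "(prod_list ms, spine (ty_inst 0 Y (msubst (\<lambda>i. ty_lift 0 (\<sigma> i)) (tren (up \<rho>) t))) [])
       \<in> star (inst (fren (up \<rho>) A) Y)" by simp
    then have "(prod_list ms, spine (TApp (TLam (msubst (\<lambda>i. ty_lift 0 (\<sigma> i)) (tren (up \<rho>) t))) Y) [])
       \<in> star (inst (fren (up \<rho>) A) Y)"
      using closed_all[OF pm] unfolding closed_set_def by blast
    then show "(prod_list ms, TApp (TLam (msubst (\<lambda>i. ty_lift 0 (\<sigma> i)) (tren (up \<rho>) t))) Y)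
       \<in> star (inst (fren (up \<rho>) A) Y)" by simp
  qed
next
  case (ty_tapp \<Gamma> t A Y)
  have all: "\<And>A. star (All A) = {(m, t). \<forall>Y. (m, TApp t Y) \<in> star (inst A Y)}"
    using pm unfolding phase_model_def by blast
  have 1: "(prod_list ms, msubst \<sigma> (tren \<rho> t)) \<in> star (All (fren (up \<rho>) A))"
    using ty_tapp.IH ty_tapp.prems by (simp only: fren.simps)
  have e: "\<rho> \<circ> rY Y = rY (\<rho> Y) \<circ> up \<rho>"
    by (rule ext) (simp add: rY_def up_def split: nat.split)
  have "fren \<rho> (inst A Y) = inst (fren (up \<rho>) A) (\<rho> Y)"
    by (simp add: inst_def fm_inst_fren fren_comp e)
  then show ?case using 1 unfolding all by simp
qed


theorem mainTheorem4:
  fixes star :: "fm \<Rightarrow> ('m::comm_monoid_mult \<times> trm) set"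
    and \<Gamma> :: "fm list" and t :: trm and A :: fm and ms :: "'m list" and ts :: "trm list"
  assumes "phase_model star"
    and "typing \<Gamma> t A"
    and "length ms = length \<Gamma>"
    and "length ts = length \<Gamma>"
    and "\<forall>i < length \<Gamma>. (ms ! i, ts ! i) \<in> star (\<Gamma> ! i)"
  shows "(prod_list ms, psubst ts t) \<in> star A"
proof -
  let ?\<sigma> = "\<lambda>i. if i < length ts then ts ! i else Var (i - length ts)"
  have "(prod_list ms, msubst ?\<sigma> (tren (\<lambda>x. x) t)) \<in> star (fren (\<lambda>x. x) A)"
  proof (rule sound[OF assms(2) assms(1) assms(3)])
    show "\<forall>i<length \<Gamma>. (ms ! i, ?\<sigma> i) \<in> star (fren (\<lambda>x. x) (\<Gamma> ! i))"
      using assms(4,5) by (simp add: fren_id)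
  qed
  then show ?thesis by (simp add: psubst_def tren_id fren_id)
qed

end
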